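(* Let integers $n \geq 0$, $m \geq 1$ and $k \geq 1$ be given, and let $p=(p_1,\dots,p_m)$ be a probability distribution on $\{1,\dots,m\}$. Throw $n$ balls independently into $m$ bins, each ball landing in bin $i$ with probability $p_i$, and let $M_n$ be the maximum load of any bin after the $n$ balls are thrown. Then \[ \Pr[\mathrm{Bin}(n, \|p\|_k) \geq k] \;\leq\; \Pr[M_n \geq k] \;\leq\; \binom{n}{k}\|p\|_k^{k}, \] where $\|p\|_k = \left(\sum_{i=1}^m p_i^k\right)^{1/k}$.
   Context: $\mathrm{Bin}(n,\alpha)$ denotes a binomial random variable with $n$ trials and success probability $\alpha$. The load of a bin is the number of balls that landed in it. *)

theory Defs
  imports "HOL-Probability.Probability"
begin

definition bin_pmf :: "(nat \<Rightarrow> real) \<Rightarrow> nat \<Rightarrow> nat pmf" where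
  "bin_pmf p m = embed_pmf (\<lambda>i. if i \<in> {1..m} then p i else 0)"

definition balls_pmf :: "nat \<Rightarrow> (nat \<Rightarrow> real) \<Rightarrow> nat \<Rightarrow> (nat \<Rightarrow> nat) pmf" where
  "balls_pmf n p m = Pi_pmf {..<n} 0 (\<lambda>_. bin_pmf p m)"

definition load :: "nat \<Rightarrow> (nat \<Rightarrow> nat) \<Rightarrow> nat \<Rightarrow> nat" where
  "load n \<omega> i = card {j \<in> {..<n}. \<omega> j = i}"

definition max_load :: "nat \<Rightarrow> nat \<Rightarrow> (nat \<Rightarrow> nat) \<Rightarrow> nat" where
  "max_load n m \<omega> = Max ((\<lambda>i. load n \<omega> i) ` {1..m})"

definition knorm :: "nat \<Rightarrow> (nat \<Rightarrow> real) \<Rightarrow> nat \<Rightarrow> real" where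
  "knorm k p m = (\<Sum>i=1..m. p i ^ k) powr (1 / real k)"

end

theory Submission
  imports Defs
begin

definition Lo :: "nat \<Rightarrow> nat \<Rightarrow> real \<Rightarrow> real \<Rightarrow> real" where
  "Lo k y x z = (\<Sum>l<k. real (y choose l) * x^l * z^(y-l))"

primrec NB :: "nat \<Rightarrow> nat \<Rightarrow> real \<Rightarrow> real \<Rightarrow> real" where
  "NB k 0 x s = 0"
| "NB k (Suc y) x s = s * NB k y x s + real (y choose (k-1)) * (s-x)^(Suc y - k)"

lemma Lo_Suc:
  "Lo (Suc k') (Suc y) x z = (x+z) * Lo (Suc k') y x z - real (y choose k') * x^(Suc k') * z^(y - k')"
proof -
  have 1: "Lo (Suc k') (Suc y) x z = z^(Suc y) + (\<Sum>i<k'. real (y choose i) * x^(Suc i) * z^(y-i))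
       + (\<Sum>i<k'. real (y choose Suc i) * x^(Suc i) * z^(y-i))"
    unfolding Lo_def by (subst sum.lessThan_Suc_shift) (simp add: sum.distrib algebra_simps)
  have 2: "(\<Sum>i<k'. real (y choose i) * x^(Suc i) * z^(y-i)) = x * (\<Sum>i<k'. real (y choose i) * x^i * z^(y-i))"
    by (simp add: sum_distrib_left algebra_simps)
  have 3: "(\<Sum>i<k'. real (y choose i) * x^i * z^(y-i)) = Lo (Suc k') y x z - real (y choose k') * x^k' * z^(y-k')"
    unfolding Lo_def by simp
  have 4: "(\<Sum>i<k'. real (y choose Suc i) * x^(Suc i) * z^(y-i)) = z * (\<Sum>i<k'. real (y choose Suc i) * x^(Suc i) * z^(y-Suc i))"
    unfolding sum_distrib_left
  proof (intro sum.cong refl)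
    fix i assume "i \<in> {..<k'}"
    show "real (y choose Suc i) * x ^ Suc i * z ^ (y - i) = z * (real (y choose Suc i) * x ^ Suc i * z ^ (y - Suc i))"
    proof (cases "Suc i \<le> y")
      case True
      then have "y - i = Suc (y - Suc i)" by simp
      then show ?thesis by simp
    next
      case False
      then show ?thesis by simp
    qed
  qed
  have 5: "z^(Suc y) + z * (\<Sum>i<k'. real (y choose Suc i) * x^(Suc i) * z^(y-Suc i)) = z * Lo (Suc k') y x z"
    unfolding Lo_def by (subst sum.lessThan_Suc_shift) (simp add: algebra_simps)
  have 6: "z * (\<Sum>i<k'. real (y choose Suc i) * x^(Suc i) * z^(y-Suc i)) = z * Lo (Suc k') y x z - z^(Suc y)"
    using 5 by linarith
  have "Lo (Suc k') (Suc y) x z = z^(Suc y) + x * (Lo (Suc k') y x z - real (y choose k') * x^k' * z^(y-k'))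
       + (z * Lo (Suc k') y x z - z^(Suc y))"
    using 1 2 3 4 6 by simp
  then show ?thesis by (simp add: algebra_simps)
qed

lemma Lo_NB:
  assumes "k \<ge> 1"
  shows "Lo k y x (s - x) = s^y - x^k * NB k y x s"
proof (induction y)
  case 0
  from assms obtain k' where k: "k = Suc k'" by (cases k) auto
  show ?case unfolding Lo_def k by (subst sum.lessThan_Suc_shift) simp
next
  case (Suc y)
  from assms obtain k' where k: "k = Suc k'" by (cases k) auto
  have e: "Lo (Suc k') y x (s-x) = s^y - x^(Suc k') * NB (Suc k') y x s" using Suc k by simp
  show ?case unfolding k Lo_Suc e by (simp add: algebra_simps)
qed

lemma NB_nonneg: "0 \<le> x \<Longrightarrow> x \<le> s \<Longrightarrow> 0 \<le> NB k y x s"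
  by (induction y) auto

lemma NB_antimono:
  assumes "0 \<le> x" "x \<le> x'" "x' \<le> s"
  shows "NB k y x' s \<le> NB k y x s"
proof (induction y)
  case 0 then show ?case by simp
next
  case (Suc y)
  have "s * NB k y x' s \<le> s * NB k y x s"
    using Suc assms by (intro mult_left_mono) auto
  moreover have "(s-x')^(Suc y - k) \<le> (s-x)^(Suc y - k)"
    using assms by (intro power_mono) auto
  ultimately show ?case
    by (simp add: add_mono mult_left_mono)
qed

lemma NB_zero: "NB k y 0 s = real (y choose k) * s^(y-k)" if "k \<ge> 1"
proof (induction y)
  case 0 then show ?case using that by simp
next
  case (Suc y)
  from that obtain k' where k: "k = Suc k'" by (cases k) auto
  have e: "NB k (Suc y) 0 s = s * (real (y choose Suc k') * s^(y - Suc k')) + real (y choose k') * s^(y-k')"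
    using Suc k by simp
  show ?case
  proof (cases "Suc k' \<le> y")
    case True
    then have "y - k' = Suc (y - Suc k')" by simp
    then have ss: "s * s^(y - Suc k') = s^(y-k')" by simp
    have "NB k (Suc y) 0 s = real (y choose Suc k') * (s * s^(y - Suc k')) + real (y choose k') * s^(y-k')"
      unfolding e by (simp only: mult_ac)
    also have "\<dots> = real (Suc y choose k) * s^(Suc y - k)"
      unfolding ss k by (simp add: algebra_simps)
    finally show ?thesis .
  next
    case False
    then have "(y choose Suc k') = 0" by simp
    then have "NB k (Suc y) 0 s = real (y choose k') * s^(y-k')" unfolding e by simp
    also have "\<dots> = real (Suc y choose k) * s^(Suc y - k)"
      unfolding k using \<open>(y choose Suc k') = 0\<close> by simp
    finally show ?thesis .
  qed
qed

lemma regroup: "(\<Sum>j\<le>(n::nat). \<Sum>l\<le>n-j. f j l) = (\<Sum>y\<le>n. \<Sum>j\<le>y. f j (y-j))"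
proof -
  have "(\<Sum>j\<le>n. \<Sum>l\<le>n-j. f j l) = (\<Sum>(j,l)\<in>Sigma {..n} (\<lambda>j. {..n-j}). f j l)"
    by (subst sum.Sigma) auto
  also have "Sigma {..n} (\<lambda>j. {..n-j}) = {(i,j). i+j \<le> n}" by auto
  also have "(\<Sum>(j,l)\<in>{(i,j). i+j \<le> n}. f j l) = (\<Sum>y\<le>n. \<Sum>j\<le>y. f j (y-j))"
    by (rule sum.triangle_reindex_eq)
  finally show ?thesis .
qed

lemma sum_lt_to_le:
  fixes n :: nat
  assumes "\<And>j. j > n \<Longrightarrow> f j = 0"
  shows "(\<Sum>j<k. f j) = (\<Sum>j\<le>n. if j < k then f j else (0::real))"
proof -
  have "(\<Sum>j\<le>n. if j < k then f j else 0) = (\<Sum>j\<in>{..n} \<inter> {..<k}. f j)"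
    by (simp add: sum.inter_restrict)
  also have "\<dots> = (\<Sum>j<k. f j)"
  proof (intro sum.mono_neutral_left)
    show "\<forall>i\<in>{..<k} - {..n} \<inter> {..<k}. f i = 0" using assms by (metis DiffE IntI atMost_iff not_le)
  qed auto
  finally show ?thesis by simp
qed

lemma Lo_alt: "Lo k y x z = (\<Sum>j\<le>y. if j < k then real (y choose j) * x^j * z^(y-j) else 0)"
  unfolding Lo_def by (rule sum_lt_to_le) simp

lemma pow_add_ge: "0 \<le> x \<Longrightarrow> 0 \<le> (y::real) \<Longrightarrow> k \<ge> 1 \<Longrightarrow> x^k + y^k \<le> (x+y)^k"
proof (induction k)
  case 0 then show ?case by simp
next
  case (Suc k)
  show ?case
  proof (cases "k = 0")
    case True then show ?thesis by simp
  next
    case False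
    then have ih: "x^k + y^k \<le> (x+y)^k" using Suc by simp
    have "x^Suc k + y^Suc k \<le> (x+y) * (x^k + y^k)"
      using Suc.prems by (simp add: algebra_simps)
    also have "\<dots> \<le> (x+y) * (x+y)^k"
      using ih Suc.prems by (intro mult_left_mono) auto
    finally show ?thesis by simp
  qed
qed

lemma root_bounds:
  fixes A b c :: real
  assumes "k \<ge> 1" "0 \<le> A" "0 \<le> b" "0 \<le> c" "c^k = A^k + b^k"
  shows "A \<le> c" "b \<le> c" "c \<le> A + b"
proof -
  have k0: "k > 0" using assms by simp
  have "0 \<le> b^k" using assms by simp
  then have "A^k \<le> c^k" using assms by simp
  then show "A \<le> c" using power_mono_iff[of A c k] assms k0 by auto
  have "0 \<le> A^k" using assms by simp
  then have "b^k \<le> c^k" using assms by simp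
  then show "b \<le> c" using power_mono_iff[of b c k] assms k0 by auto
  have "c^k \<le> (A+b)^k" using assms pow_add_ge[of A b k] by simp
  then show "c \<le> A + b" using power_mono_iff[of c "A+b" k] assms k0 by auto
qed

lemma pointwise:
  assumes k: "k \<ge> 1" and A: "0 \<le> A" and b: "0 \<le> b" and c: "0 \<le> c" and ck: "c^k = A^k + b^k"
  shows "(\<Sum>j\<le>y. if j < k \<and> y - j < k then real (y choose j) * A^j * b^(y-j) else 0)
          \<le> Lo k y c (A + b - c)"
proof -
  define s where "s = A + b"
  have cA: "A \<le> c" and cb: "b \<le> c" and cs: "c \<le> s"
    using root_bounds[OF k A b c ck] by (auto simp: s_def)
  show ?thesis
  proof (cases "y + 1 < 2 * k")
    case False
    have "(\<Sum>j\<le>y. if j < k \<and> y - j < k then real (y choose j) * A^j * b^(y-j) else 0) = 0"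
      using False by (intro sum.neutral) auto
    moreover have "0 \<le> Lo k y c (A + b - c)"
      unfolding Lo_def using cs c by (intro sum_nonneg) (auto simp: s_def)
    ultimately show ?thesis by simp
  next
    case True
    define g where "g j = real (y choose j) * A^j * b^(y-j)" for j
    have split: "(if j < k \<and> y - j < k then g j else 0) =
        (if j < k then g j else 0) + (if y - j < k then g j else 0) - g j" if "j \<le> y" for j
      using True that by auto
    have "(\<Sum>j\<le>y. if j < k \<and> y - j < k then g j else 0) =
        (\<Sum>j\<le>y. if j < k then g j else 0) + (\<Sum>j\<le>y. if y - j < k then g j else 0) - (\<Sum>j\<le>y. g j)"
      by (simp add: split sum.distrib sum_subtractf)
    also have "(\<Sum>j\<le>y. g j) = s^y"
      unfolding g_def s_def by (simp add: binomial_ring)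
    also have "(\<Sum>j\<le>y. if j < k then g j else 0) = Lo k y A (s - A)"
      unfolding Lo_alt g_def s_def by (simp only: add_diff_cancel_left')
    also have "(\<Sum>j\<le>y. if y - j < k then g j else 0) = (\<Sum>j\<le>y. if j < k then real (y choose j) * b^j * A^(y-j) else 0)"
      unfolding g_def
      by (rule sum.reindex_bij_witness[where i="\<lambda>j. y - j" and j="\<lambda>j. y - j"])
         (auto simp: binomial_symmetric[symmetric])
    also have "\<dots> = Lo k y b (s - b)"
      unfolding Lo_alt s_def by (simp only: add_diff_cancel_right')
    finally have W: "(\<Sum>j\<le>y. if j < k \<and> y - j < k then g j else 0) = s^y - A^k * NB k y A s - b^k * NB k y b s"
      using Lo_NB[OF k] by simp
    have "A^k * NB k y c s \<le> A^k * NB k y A s"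
      using NB_antimono[OF A cA cs] A by (intro mult_left_mono) auto
    moreover have "b^k * NB k y c s \<le> b^k * NB k y b s"
      using NB_antimono[OF b cb cs] b by (intro mult_left_mono) auto
    ultimately have "s^y - A^k * NB k y A s - b^k * NB k y b s \<le> s^y - c^k * NB k y c s"
      unfolding ck by (simp add: algebra_simps)
    also have "\<dots> = Lo k y c (s - c)" using Lo_NB[OF k] by simp
    finally show ?thesis using W unfolding g_def s_def by simp
  qed
qed

lemma regroup_binom:
  fixes x z e :: real
  shows "(\<Sum>j\<le>n. \<Sum>l\<le>n-j. if P j l then real (n choose j) * real ((n-j) choose l) * x^j * z^l * e^(n-j-l) else 0)
   = (\<Sum>y\<le>n. real (n choose y) * e^(n-y) * (\<Sum>j\<le>y. if P j (y-j) then real (y choose j) * x^j * z^(y-j) else 0))"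
  unfolding regroup
proof (intro sum.cong refl)
  fix y assume y: "y \<in> {..n}"
  show "(\<Sum>j\<le>y. if P j (y-j) then real (n choose j) * real ((n-j) choose (y-j)) * x^j * z^(y-j) * e^(n-j-(y-j)) else 0)
     = real (n choose y) * e^(n-y) * (\<Sum>j\<le>y. if P j (y-j) then real (y choose j) * x^j * z^(y-j) else 0)"
    unfolding sum_distrib_left
  proof (intro sum.cong refl)
    fix j assume j: "j \<in> {..y}"
    have c: "real (n choose j) * real ((n-j) choose (y-j)) = real (n choose y) * real (y choose j)"
      using choose_mult[of j y n] y j by (simp flip: of_nat_mult)
    have e: "n - j - (y - j) = n - y" using y j by simp
    show "(if P j (y-j) then real (n choose j) * real ((n-j) choose (y-j)) * x^j * z^(y-j) * e^(n-j-(y-j)) else 0)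
      = real (n choose y) * e^(n-y) * (if P j (y-j) then real (y choose j) * x^j * z^(y-j) else 0)"
      using c unfolding e by (auto simp: algebra_simps)
  qed
qed

lemma two_bin:
  assumes k: "k \<ge> 1" and A: "0 \<le> A" and b: "0 \<le> b" and c: "0 \<le> c" and e: "0 \<le> e"
    and ck: "c^k = A^k + b^k"
  shows "(\<Sum>j<k. real (n choose j) * A^j * Lo k (n-j) b e) \<le> Lo k n c (e + (A + b - c))"
proof -
  define w where "w = A + b - c"
  have w: "0 \<le> w" using root_bounds[OF k A b c ck] by (simp add: w_def)
  have L1: "(\<Sum>j<k. real (n choose j) * A^j * Lo k (n-j) b e) =
     (\<Sum>j\<le>n. \<Sum>l\<le>n-j. if j < k \<and> l < k then real (n choose j) * real ((n-j) choose l) * A^j * b^l * e^(n-j-l) else 0)"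
  proof -
    have "(\<Sum>j<k. real (n choose j) * A^j * Lo k (n-j) b e) =
       (\<Sum>j\<le>n. if j < k then real (n choose j) * A^j * Lo k (n-j) b e else 0)"
      by (rule sum_lt_to_le) simp
    also have "\<dots> = (\<Sum>j\<le>n. \<Sum>l\<le>n-j. if j < k \<and> l < k then real (n choose j) * real ((n-j) choose l) * A^j * b^l * e^(n-j-l) else 0)"
    proof (intro sum.cong refl)
      fix j
      show "(if j < k then real (n choose j) * A^j * Lo k (n-j) b e else 0) =
        (\<Sum>l\<le>n-j. if j < k \<and> l < k then real (n choose j) * real ((n-j) choose l) * A^j * b^l * e^(n-j-l) else 0)"
        unfolding Lo_alt sum_distrib_left
        by (cases "j < k") (auto intro!: sum.cong simp: algebra_simps)
    qed
    finally show ?thesis .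
  qed
  have R1: "Lo k n c (e + w) =
     (\<Sum>j\<le>n. \<Sum>l\<le>n-j. if j < k then real (n choose j) * real ((n-j) choose l) * c^j * w^l * e^(n-j-l) else 0)"
  proof -
    have "Lo k n c (e + w) = (\<Sum>j\<le>n. if j < k then real (n choose j) * c^j * (w + e)^(n-j) else 0)"
      unfolding Lo_def add.commute[of e w] by (rule sum_lt_to_le) simp
    also have "\<dots> = (\<Sum>j\<le>n. \<Sum>l\<le>n-j. if j < k then real (n choose j) * real ((n-j) choose l) * c^j * w^l * e^(n-j-l) else 0)"
    proof (intro sum.cong refl)
      fix j
      show "(if j < k then real (n choose j) * c^j * (w + e)^(n-j) else 0) =
        (\<Sum>l\<le>n-j. if j < k then real (n choose j) * real ((n-j) choose l) * c^j * w^l * e^(n-j-l) else 0)"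
        unfolding binomial_ring sum_distrib_left
        by (cases "j < k") (auto intro!: sum.cong simp: algebra_simps)
    qed
    finally show ?thesis .
  qed
  have "(\<Sum>j<k. real (n choose j) * A^j * Lo k (n-j) b e) =
     (\<Sum>y\<le>n. real (n choose y) * e^(n-y) * (\<Sum>j\<le>y. if j < k \<and> y - j < k then real (y choose j) * A^j * b^(y-j) else 0))"
    unfolding L1 by (rule regroup_binom)
  also have "\<dots> \<le> (\<Sum>y\<le>n. real (n choose y) * e^(n-y) * Lo k y c w)"
    unfolding w_def
    by (intro sum_mono mult_left_mono pointwise[OF k A b c ck]) (auto simp: e)
  also have "\<dots> = (\<Sum>y\<le>n. real (n choose y) * e^(n-y) * (\<Sum>j\<le>y. if j < k then real (y choose j) * c^j * w^(y-j) else 0))"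
    unfolding Lo_alt ..
  also have "\<dots> = Lo k n c (e + w)"
    unfolding R1 by (rule regroup_binom[symmetric])
  finally show ?thesis by (simp add: w_def)
qed

primrec G :: "nat \<Rightarrow> (nat \<Rightarrow> real) \<Rightarrow> (nat \<Rightarrow> nat) \<Rightarrow> nat \<Rightarrow> real \<Rightarrow> real" where
  "G 0 a t n d = d^n"
| "G (Suc m) a t n d = (\<Sum>j<t (Suc m). real (n choose j) * a (Suc m)^j * G m a t (n-j) d)"

lemma G_cong: "(\<And>i. i \<in> {1..m} \<Longrightarrow> t i = t' i) \<Longrightarrow> G m a t n d = G m a t' n d"
proof (induction m arbitrary: n)
  case 0 then show ?case by simp
next
  case (Suc m)
  have "t (Suc m) = t' (Suc m)" using Suc.prems by simp
  moreover have "\<And>n. G m a t n d = G m a t' n d" using Suc by simp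
  ultimately show ?case by simp
qed

lemma G_Suc_n:
  "G m a t (Suc n) d = (\<Sum>y=1..m. a y * G m a (t(y := t y - 1)) n d) + d * G m a t n d"
proof (induction m arbitrary: n)
  case 0 then show ?case by simp
next
  case (Suc m)
  define T where "T = t (Suc m)"
  define A where "A = a (Suc m)"
  define P1 where "P1 = (\<Sum>j<T. real (n choose j) * A^j * G m a t (Suc n - j) d)"
  define P2 where "P2 = (\<Sum>j<T-1. real (n choose j) * A^(Suc j) * G m a t (n - j) d)"
  have split: "G (Suc m) a t (Suc n) d = P1 + P2"
  proof (cases T)
    case 0 then show ?thesis by (simp add: P1_def P2_def T_def)
  next
    case (Suc T')
    have "G (Suc m) a t (Suc n) d = (\<Sum>j<Suc T'. real (Suc n choose j) * A^j * G m a t (Suc n - j) d)"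
      by (simp add: T_def[symmetric] A_def[symmetric] Suc)
    also have "\<dots> = G m a t (Suc n) d + (\<Sum>i<T'. real (Suc n choose Suc i) * A^(Suc i) * G m a t (n - i) d)"
      by (subst sum.lessThan_Suc_shift) simp
    also have "\<dots> = G m a t (Suc n) d + (\<Sum>i<T'. real (n choose Suc i) * A^(Suc i) * G m a t (n - i) d)
         + (\<Sum>i<T'. real (n choose i) * A^(Suc i) * G m a t (n - i) d)"
      by (simp add: sum.distrib algebra_simps)
    also have "G m a t (Suc n) d + (\<Sum>i<T'. real (n choose Suc i) * A^(Suc i) * G m a t (n - i) d) = P1"
      unfolding P1_def Suc by (subst sum.lessThan_Suc_shift) simp
    also have "(\<Sum>i<T'. real (n choose i) * A^(Suc i) * G m a t (n - i) d) = P2"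
      unfolding P2_def Suc by simp
    finally show ?thesis .
  qed
  have P2: "P2 = A * G (Suc m) a (t(Suc m := T - 1)) n d"
  proof -
    have "G m a (t(Suc m := T - 1)) k d = G m a t k d" for k
      by (rule G_cong) auto
    then show ?thesis
      unfolding P2_def by (simp add: sum_distrib_left A_def algebra_simps)
  qed
  have P1: "P1 = (\<Sum>y=1..m. a y * G (Suc m) a (t(y := t y - 1)) n d) + d * G (Suc m) a t n d"
  proof -
    have "P1 = (\<Sum>j<T. real (n choose j) * A^j *
        ((\<Sum>y=1..m. a y * G m a (t(y := t y - 1)) (n - j) d) + d * G m a t (n - j) d))"
      unfolding P1_def
    proof (intro sum.cong refl)
      fix j
      show "real (n choose j) * A^j * G m a t (Suc n - j) d = real (n choose j) * A^j *
        ((\<Sum>y=1..m. a y * G m a (t(y := t y - 1)) (n - j) d) + d * G m a t (n - j) d)"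
      proof (cases "j \<le> n")
        case True
        then have "Suc n - j = Suc (n - j)" by simp
        then show ?thesis using Suc.IH[of "n - j"] by (simp only:)
      next
        case False then show ?thesis by simp
      qed
    qed
    also have "\<dots> = (\<Sum>j<T. \<Sum>y=1..m. a y * (real (n choose j) * A^j * G m a (t(y := t y - 1)) (n - j) d))
        + (\<Sum>j<T. d * (real (n choose j) * A^j * G m a t (n - j) d))"
      unfolding distrib_left sum.distrib sum_distrib_left by (simp only: mult_ac)
    also have "\<dots> = (\<Sum>y=1..m. a y * (\<Sum>j<T. real (n choose j) * A^j * G m a (t(y := t y - 1)) (n - j) d))
        + d * (\<Sum>j<T. real (n choose j) * A^j * G m a t (n - j) d)"
      by (subst sum.swap) (simp only: sum_distrib_left)
    also have "\<dots> = (\<Sum>y=1..m. a y * G (Suc m) a (t(y := t y - 1)) n d) + d * G (Suc m) a t n d"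
    proof -
      have "(\<Sum>y=1..m. a y * (\<Sum>j<T. real (n choose j) * A^j * G m a (t(y := t y - 1)) (n - j) d))
          = (\<Sum>y=1..m. a y * G (Suc m) a (t(y := t y - 1)) n d)"
        by (intro sum.cong refl) (simp add: T_def A_def)
      then show ?thesis by (simp add: T_def A_def)
    qed
    finally show ?thesis .
  qed
  have "(\<Sum>y=1..Suc m. a y * G (Suc m) a (t(y := t y - 1)) n d) =
     (\<Sum>y=1..m. a y * G (Suc m) a (t(y := t y - 1)) n d) + A * G (Suc m) a (t(Suc m := T - 1)) n d"
  proof -
    have "(\<Sum>y=1..Suc m. F y) = (\<Sum>y=1..m. F y) + F (Suc m)" for F :: "nat \<Rightarrow> real" by simp
    then show ?thesis unfolding A_def T_def .
  qed
  then show ?case using split P1 P2 by linarith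
qed

lemma sum_pow_le:
  fixes m :: nat
  assumes "k \<ge> 1"
  shows "(\<forall>i\<in>{1..m}. 0 \<le> a i) \<Longrightarrow> (\<Sum>i=1..m. a i ^ k) \<le> (\<Sum>i=1..m. a i :: real) ^ k"
proof (induction m)
  case 0 then show ?case using assms by simp
next
  case (Suc m)
  have ih: "(\<Sum>i=1..m. a i ^ k) \<le> (\<Sum>i=1..m. a i) ^ k" using Suc by simp
  have "(\<Sum>i=1..Suc m. a i ^ k) = (\<Sum>i=1..m. a i ^ k) + a (Suc m) ^ k" by simp
  also have "\<dots> \<le> (\<Sum>i=1..m. a i) ^ k + a (Suc m) ^ k" using ih by simp
  also have "\<dots> \<le> ((\<Sum>i=1..m. a i) + a (Suc m)) ^ k"
    using Suc.prems assms by (intro pow_add_ge sum_nonneg) auto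
  finally show ?case by simp
qed

lemma Lo_zero: assumes "k \<ge> 1" shows "Lo k n 0 d = d^n"
proof -
  obtain k' where k: "k = Suc k'" using assms by (cases k) auto
  have "Lo k n 0 d = real (n choose 0) * 0^0 * d^(n-0) + (\<Sum>i<k'. real (n choose Suc i) * 0^(Suc i) * d^(n - Suc i))"
    unfolding Lo_def k by (rule sum.lessThan_Suc_shift)
  then show ?thesis by simp
qed

lemma merge:
  assumes k: "k \<ge> 1" and a: "\<And>i. i \<in> {1..m} \<Longrightarrow> 0 \<le> a i" and d: "0 \<le> d"
  shows "0 \<le> b \<Longrightarrow> b^k = (\<Sum>i=1..m. a i ^ k) \<Longrightarrow>
     G m a (\<lambda>_. k) n d \<le> Lo k n b (d + ((\<Sum>i=1..m. a i) - b))"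
  using a
proof (induction m arbitrary: n b)
  case 0
  then have "b = 0" using k by simp
  then show ?case using Lo_zero[OF k] by simp
next
  case (Suc m)
  define A where "A = a (Suc m)"
  define Sk where "Sk = (\<Sum>i=1..m. a i ^ k)"
  define S1 where "S1 = (\<Sum>i=1..m. a i)"
  define b' where "b' = root k Sk"
  have A: "0 \<le> A" using Suc.prems by (simp add: A_def)
  have Sk: "0 \<le> Sk" unfolding Sk_def using Suc.prems by (intro sum_nonneg) auto
  have b': "0 \<le> b'" "b'^k = Sk" using Sk k by (auto simp: b'_def)
  have ih: "G m a (\<lambda>_. k) n' d \<le> Lo k n' b' (d + (S1 - b'))" for n'
    using Suc.IH[of b' n'] b' Suc.prems by (simp add: Sk_def S1_def)
  have "Sk \<le> S1 ^ k" unfolding Sk_def S1_def using sum_pow_le[OF k, of m a] Suc.prems by simp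
  moreover have "0 \<le> S1" unfolding S1_def using Suc.prems by (intro sum_nonneg) auto
  ultimately have "b' \<le> S1" using power_mono_iff[of b' S1 k] b' k by auto
  then have d': "0 \<le> d + (S1 - b')" using d by simp
  have bk: "b^k = A^k + b'^k" using Suc.prems b' by (simp add: A_def Sk_def)
  have "G (Suc m) a (\<lambda>_. k) n d = (\<Sum>j<k. real (n choose j) * A^j * G m a (\<lambda>_. k) (n-j) d)"
    by (simp add: A_def)
  also have "\<dots> \<le> (\<Sum>j<k. real (n choose j) * A^j * Lo k (n-j) b' (d + (S1 - b')))"
    using ih A by (intro sum_mono mult_left_mono) auto
  also have "\<dots> \<le> Lo k n b ((d + (S1 - b')) + (A + b' - b))"
    by (rule two_bin[OF k A b'(1) Suc.prems(1) d' bk])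
  also have "(d + (S1 - b')) + (A + b' - b) = d + ((\<Sum>i=1..Suc m. a i) - b)"
    by (simp add: S1_def A_def)
  finally show ?case .
qed

lemma pmf_bin:
  assumes p: "\<And>i. i \<in> {1..m} \<Longrightarrow> p i \<ge> 0" and s: "(\<Sum>i=1..m. p i) = 1"
  shows "pmf (bin_pmf p m) i = (if i \<in> {1..m} then p i else 0)"
  unfolding bin_pmf_def
proof (rule pmf_embed_pmf)
  show "\<And>x. 0 \<le> (if x \<in> {1..m} then p x else 0)" using p by auto
  have "(\<integral>\<^sup>+x. ennreal (if x \<in> {1..m} then p x else 0) \<partial>count_space UNIV) =
     (\<Sum>x\<in>{1..m}. ennreal (if x \<in> {1..m} then p x else 0))"
    by (rule nn_integral_count_space') auto
  also have "\<dots> = ennreal (\<Sum>x\<in>{1..m}. (if x \<in> {1..m} then p x else 0))"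
    using p by (intro sum_ennreal) auto
  also have "(\<Sum>x\<in>{1..m}. (if x \<in> {1..m} then p x else 0)) = 1" using s by simp
  finally show "(\<integral>\<^sup>+x. ennreal (if x \<in> {1..m} then p x else 0) \<partial>count_space UNIV) = 1" by simp
qed

lemma set_pmf_bin:
  assumes p: "\<And>i. i \<in> {1..m} \<Longrightarrow> p i \<ge> 0" and s: "(\<Sum>i=1..m. p i) = 1"
  shows "set_pmf (bin_pmf p m) \<subseteq> {1..m}"
  using pmf_bin[OF p s] by (auto simp: set_pmf_iff split: if_splits)

lemma prob_bind_finite:
  assumes "finite A" "set_pmf M \<subseteq> A"
  shows "measure_pmf.prob (bind_pmf M N) X = (\<Sum>x\<in>A. pmf M x * measure_pmf.prob (N x) X)"
proof -
  have "ennreal (measure_pmf.prob (bind_pmf M N) X) = emeasure (bind_pmf M N) X"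
    by (simp add: measure_pmf.emeasure_eq_measure)
  also have "\<dots> = (\<integral>\<^sup>+x. emeasure (N x) X \<partial>M)" by simp
  also have "\<dots> = (\<Sum>x\<in>A. emeasure (N x) X * pmf M x)"
    using assms by (intro nn_integral_measure_pmf_support) (auto simp: set_pmf_iff)
  also have "\<dots> = (\<Sum>x\<in>A. ennreal (pmf M x * measure_pmf.prob (N x) X))"
    by (intro sum.cong refl) (simp add: measure_pmf.emeasure_eq_measure ennreal_mult' mult.commute)
  also have "\<dots> = ennreal (\<Sum>x\<in>A. pmf M x * measure_pmf.prob (N x) X)"
    by (intro sum_ennreal) auto
  finally show ?thesis
    by (subst (asm) ennreal_inj) (auto intro: sum_nonneg)
qed

lemma load_upd: "load (Suc n) (f(n := y)) i = load n f i + (if y = i then 1 else 0)"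
proof -
  have "{j \<in> {..<Suc n}. (f(n := y)) j = i} =
      (if y = i then insert n {j \<in> {..<n}. f j = i} else {j \<in> {..<n}. f j = i})"
    by (auto simp: less_Suc_eq)
  then show ?thesis unfolding load_def by simp
qed

lemma Q_Suc:
  assumes p: "\<And>i. i \<in> {1..m} \<Longrightarrow> p i \<ge> 0" and s: "(\<Sum>i=1..m. p i) = 1"
  shows "measure_pmf.prob (balls_pmf (Suc n) p m) {\<omega>. \<forall>i\<in>{1..m}. load (Suc n) \<omega> i < t i} =
    (\<Sum>y=1..m. p y * measure_pmf.prob (balls_pmf n p m) {\<omega>. \<forall>i\<in>{1..m}. load n \<omega> i < (t(y := t y - 1)) i})"
proof -
  have "balls_pmf (Suc n) p m = bind_pmf (bin_pmf p m) (\<lambda>y. map_pmf (\<lambda>f. f(n := y)) (balls_pmf n p m))"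
    unfolding balls_pmf_def lessThan_Suc
    by (subst Pi_pmf_insert') (auto simp: map_pmf_def)
  then have "measure_pmf.prob (balls_pmf (Suc n) p m) {\<omega>. \<forall>i\<in>{1..m}. load (Suc n) \<omega> i < t i} =
     (\<Sum>y=1..m. pmf (bin_pmf p m) y * measure_pmf.prob (map_pmf (\<lambda>f. f(n := y)) (balls_pmf n p m)) {\<omega>. \<forall>i\<in>{1..m}. load (Suc n) \<omega> i < t i})"
    using set_pmf_bin[OF p s] by (simp add: prob_bind_finite[where A="{1..m}"])
  also have "\<dots> = (\<Sum>y=1..m. p y * measure_pmf.prob (balls_pmf n p m) {\<omega>. \<forall>i\<in>{1..m}. load n \<omega> i < (t(y := t y - 1)) i})"
  proof (intro sum.cong refl)
    fix y assume y: "y \<in> {1..m}"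
    have "(\<lambda>f. f(n := y)) -` {\<omega>. \<forall>i\<in>{1..m}. load (Suc n) \<omega> i < t i} =
        {\<omega>. \<forall>i\<in>{1..m}. load n \<omega> i < (t(y := t y - 1)) i}"
      by (auto simp: load_upd split: if_splits)
    then show "pmf (bin_pmf p m) y * measure_pmf.prob (map_pmf (\<lambda>f. f(n := y)) (balls_pmf n p m)) {\<omega>. \<forall>i\<in>{1..m}. load (Suc n) \<omega> i < t i}
       = p y * measure_pmf.prob (balls_pmf n p m) {\<omega>. \<forall>i\<in>{1..m}. load n \<omega> i < (t(y := t y - 1)) i}"
      using y pmf_bin[OF p s, of y] by simp
  qed
  finally show ?thesis .
qed

lemma G_zero_n: "G m a t 0 d = (if \<forall>i\<in>{1..m}. 0 < t i then 1 else 0)"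
proof (induction m)
  case 0 then show ?case by simp
next
  case (Suc m)
  show ?case
  proof (cases "t (Suc m)")
    case 0
    then show ?thesis by (auto simp: Suc.IH)
  next
    case (Suc T')
    have "G (Suc m) a t 0 d = real (0 choose 0) * a (Suc m)^0 * G m a t (0 - 0) d
        + (\<Sum>i<T'. real (0 choose Suc i) * a (Suc m)^(Suc i) * G m a t (0 - Suc i) d)"
      unfolding G.simps Suc by (rule sum.lessThan_Suc_shift)
    then have "G (Suc m) a t 0 d = G m a t 0 d" by simp
    then show ?thesis using Suc.IH \<open>t (Suc m) = Suc T'\<close> by (auto simp: le_Suc_eq)
  qed
qed

lemma Q_eq:
  assumes p: "\<And>i. i \<in> {1..m} \<Longrightarrow> p i \<ge> 0" and s: "(\<Sum>i=1..m. p i) = 1"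
  shows "measure_pmf.prob (balls_pmf n p m) {\<omega>. \<forall>i\<in>{1..m}. load n \<omega> i < t i} = G m p t n 0"
proof (induction n arbitrary: t)
  case 0
  have "balls_pmf 0 p m = return_pmf (\<lambda>_. 0)" unfolding balls_pmf_def by simp
  moreover have "load 0 \<omega> i = 0" for \<omega> i unfolding load_def by simp
  ultimately show ?case by (simp add: G_zero_n indicator_def)
next
  case (Suc n)
  have "measure_pmf.prob (balls_pmf (Suc n) p m) {\<omega>. \<forall>i\<in>{1..m}. load (Suc n) \<omega> i < t i} =
    (\<Sum>y=1..m. p y * measure_pmf.prob (balls_pmf n p m) {\<omega>. \<forall>i\<in>{1..m}. load n \<omega> i < (t(y := t y - 1)) i})"
    by (rule Q_Suc[OF p s])
  also have "\<dots> = (\<Sum>y=1..m. p y * G m p (t(y := t y - 1)) n 0)"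
    by (rule sum.cong[OF refl]) (simp only: Suc.IH)
  finally show ?case unfolding G_Suc_n by simp
qed

lemma prob_all_S:
  assumes p: "\<And>i. i \<in> {1..m} \<Longrightarrow> p i \<ge> 0" and s: "(\<Sum>i=1..m. p i) = 1"
    and S: "S \<subseteq> {..<n}" and i: "i \<in> {1..m}"
  shows "measure_pmf.prob (balls_pmf n p m) {\<omega>. \<forall>j\<in>S. \<omega> j = i} = p i ^ card S"
proof -
  have "{\<omega>. \<forall>j\<in>S. \<omega> j = i} = Pi {..<n} (\<lambda>j. if j \<in> S then {i} else UNIV)"
    using S by (auto simp: Pi_def)
  then have "measure_pmf.prob (balls_pmf n p m) {\<omega>. \<forall>j\<in>S. \<omega> j = i} =
      (\<Prod>j\<in>{..<n}. measure_pmf.prob (bin_pmf p m) (if j \<in> S then {i} else UNIV))"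
    unfolding balls_pmf_def by (simp add: measure_Pi_pmf_Pi)
  also have "\<dots> = (\<Prod>j\<in>{..<n}. if j \<in> S then p i else 1)"
  proof -
    have pi: "pmf (bin_pmf p m) i = p i" using pmf_bin[OF p s, of i] i by simp
    show ?thesis by (intro prod.cong refl) (simp add: measure_pmf_single pi)
  qed
  also have "\<dots> = (\<Prod>j\<in>{..<n} \<inter> S. p i)"
    by (rule prod.inter_restrict[symmetric]) simp
  also have "{..<n} \<inter> S = S" using S by auto
  finally show ?thesis by simp
qed

lemma upper:
  assumes m: "m \<ge> 1" and p: "\<And>i. i \<in> {1..m} \<Longrightarrow> p i \<ge> 0" and s: "(\<Sum>i=1..m. p i) = 1"
  shows "measure_pmf.prob (balls_pmf n p m) {\<omega>. max_load n m \<omega> \<ge> k}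
           \<le> real (n choose k) * (\<Sum>i=1..m. p i ^ k)"
proof -
  define SS where "SS = {S. S \<subseteq> {..<n} \<and> card S = k}"
  have fin: "finite SS" unfolding SS_def by (rule finite_subset[of _ "Pow {..<n}"]) auto
  have card: "card SS = n choose k" unfolding SS_def using n_subsets[of "{..<n}" k] by simp
  have sub: "{\<omega>. max_load n m \<omega> \<ge> k} \<subseteq> (\<Union>i\<in>{1..m}. \<Union>S\<in>SS. {\<omega>. \<forall>j\<in>S. \<omega> j = i})"
  proof
    fix \<omega> assume "\<omega> \<in> {\<omega>. max_load n m \<omega> \<ge> k}"
    then have kM: "k \<le> Max ((\<lambda>i. load n \<omega> i) ` {1..m})" by (simp add: max_load_def)
    have "Max ((\<lambda>i. load n \<omega> i) ` {1..m}) \<in> (\<lambda>i. load n \<omega> i) ` {1..m}"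
      using m by (intro Max_in) auto
    then obtain i where i: "i \<in> {1..m}" and "Max ((\<lambda>i. load n \<omega> i) ` {1..m}) = load n \<omega> i" by auto
    with kM have "k \<le> card {j \<in> {..<n}. \<omega> j = i}" by (simp add: load_def)
    then obtain T where T: "T \<subseteq> {j \<in> {..<n}. \<omega> j = i}" "card T = k"
      by (meson obtain_subset_with_card_n)
    then have "T \<in> SS" unfolding SS_def by auto
    with T i show "\<omega> \<in> (\<Union>i\<in>{1..m}. \<Union>S\<in>SS. {\<omega>. \<forall>j\<in>S. \<omega> j = i})" by blast
  qed
  have "measure_pmf.prob (balls_pmf n p m) {\<omega>. max_load n m \<omega> \<ge> k}
      \<le> measure_pmf.prob (balls_pmf n p m) (\<Union>i\<in>{1..m}. \<Union>S\<in>SS. {\<omega>. \<forall>j\<in>S. \<omega> j = i})"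
    by (rule measure_pmf.finite_measure_mono[OF sub]) simp
  also have "\<dots> \<le> (\<Sum>i\<in>{1..m}. measure_pmf.prob (balls_pmf n p m) (\<Union>S\<in>SS. {\<omega>. \<forall>j\<in>S. \<omega> j = i}))"
    by (rule measure_pmf.finite_measure_subadditive_finite) auto
  also have "\<dots> \<le> (\<Sum>i\<in>{1..m}. \<Sum>S\<in>SS. measure_pmf.prob (balls_pmf n p m) {\<omega>. \<forall>j\<in>S. \<omega> j = i})"
    by (intro sum_mono measure_pmf.finite_measure_subadditive_finite fin) auto
  also have "\<dots> = (\<Sum>i\<in>{1..m}. \<Sum>S\<in>SS. p i ^ k)"
  proof (intro sum.cong refl)
    fix i S assume i: "i \<in> {1..m}" and S: "S \<in> SS"
    then show "measure_pmf.prob (balls_pmf n p m) {\<omega>. \<forall>j\<in>S. \<omega> j = i} = p i ^ k"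
      using prob_all_S[OF p s _ i, of S] by (simp add: SS_def)
  qed
  also have "\<dots> = real (n choose k) * (\<Sum>i=1..m. p i ^ k)"
    by (simp add: card sum_distrib_left)
  finally show ?thesis .
qed

lemma knorm_props:
  assumes k: "k \<ge> 1" and p: "\<And>i. i \<in> {1..m} \<Longrightarrow> p i \<ge> 0" and s: "(\<Sum>i=1..m. p i) = 1"
  shows "0 \<le> knorm k p m" "knorm k p m ^ k = (\<Sum>i=1..m. p i ^ k)" "knorm k p m \<le> 1"
proof -
  define S where "S = (\<Sum>i=1..m. p i ^ k)"
  have S0: "0 \<le> S" unfolding S_def using p by (intro sum_nonneg) auto
  have q: "knorm k p m = root k S"
    unfolding knorm_def S_def[symmetric] using k S0 by (simp add: root_powr_inverse)
  show "0 \<le> knorm k p m" unfolding q using S0 by (rule real_root_ge_zero)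
  show qk: "knorm k p m ^ k = (\<Sum>i=1..m. p i ^ k)" unfolding q S_def[symmetric] using S0 k by simp
  have "S \<le> 1" unfolding S_def using sum_pow_le[OF k, of m p] p s by simp
  then have "knorm k p m ^ k \<le> 1 ^ k" using qk S_def by simp
  then show "knorm k p m \<le> 1" using power_mono_iff[of "knorm k p m" 1 k] k \<open>0 \<le> knorm k p m\<close> by auto
qed

theorem theorem1:
  fixes n m k :: nat and p :: "nat \<Rightarrow> real"
  assumes "m \<ge> 1" and "k \<ge> 1"
    and "\<And>i. i \<in> {1..m} \<Longrightarrow> p i \<ge> 0"
    and "(\<Sum>i=1..m. p i) = 1"
  shows "measure_pmf.prob (binomial_pmf n (knorm k p m)) {x. x \<ge> k}
           \<le> measure_pmf.prob (balls_pmf n p m) {\<omega>. max_load n m \<omega> \<ge> k}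
         \<and> measure_pmf.prob (balls_pmf n p m) {\<omega>. max_load n m \<omega> \<ge> k}
           \<le> real (n choose k) * knorm k p m ^ k"
proof
  note m = assms(1) and k = assms(2) and p = assms(3) and s = assms(4)
  define q where "q = knorm k p m"
  have q0: "0 \<le> q" and qk: "q ^ k = (\<Sum>i=1..m. p i ^ k)" and q1: "q \<le> 1"
    using knorm_props[OF k p s] by (auto simp: q_def)
  show "measure_pmf.prob (balls_pmf n p m) {\<omega>. max_load n m \<omega> \<ge> k}
           \<le> real (n choose k) * knorm k p m ^ k"
    using upper[OF m p s, of n k] qk by (simp add: q_def)
  have bin: "measure_pmf.prob (binomial_pmf n q) {x. x \<ge> k} = 1 - Lo k n q (1 - q)"
  proof -
    have "{x. x \<ge> k} = UNIV - {..<k}" by auto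
    then have "measure_pmf.prob (binomial_pmf n q) {x. x \<ge> k} = 1 - measure_pmf.prob (binomial_pmf n q) {..<k}"
      using measure_pmf.prob_compl[of "{..<k}" "binomial_pmf n q"] by simp
    also have "measure_pmf.prob (binomial_pmf n q) {..<k} = (\<Sum>j<k. pmf (binomial_pmf n q) j)"
      by (simp add: measure_measure_pmf_finite)
    also have "\<dots> = Lo k n q (1 - q)"
      unfolding Lo_def using q0 q1 by simp
    finally show ?thesis .
  qed
  have ml: "measure_pmf.prob (balls_pmf n p m) {\<omega>. max_load n m \<omega> \<ge> k} = 1 - G m p (\<lambda>_. k) n 0"
  proof -
    have "max_load n m \<omega> < k \<longleftrightarrow> (\<forall>i\<in>{1..m}. load n \<omega> i < k)" for \<omega>
      unfolding max_load_def using m by (subst Max_less_iff) auto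
    then have e: "{\<omega>. max_load n m \<omega> \<ge> k} = UNIV - {\<omega>. \<forall>i\<in>{1..m}. load n \<omega> i < k}"
      by (auto simp: not_le[symmetric])
    have Q: "measure_pmf.prob (balls_pmf n p m) {\<omega>. \<forall>i\<in>{1..m}. load n \<omega> i < k} = G m p (\<lambda>_. k) n 0"
      using Q_eq[OF p s, of n "\<lambda>_. k"] by simp
    show ?thesis unfolding e
      using measure_pmf.prob_compl[of "{\<omega>. \<forall>i\<in>{1..m}. load n \<omega> i < k}" "balls_pmf n p m"] Q
      by simp
  qed
  have "G m p (\<lambda>_. k) n 0 \<le> Lo k n q (0 + ((\<Sum>i=1..m. p i) - q))"
    by (rule merge[OF k p _ q0 qk]) auto
  then have "G m p (\<lambda>_. k) n 0 \<le> Lo k n q (1 - q)" using s by simp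
  then show "measure_pmf.prob (binomial_pmf n (knorm k p m)) {x. x \<ge> k}
           \<le> measure_pmf.prob (balls_pmf n p m) {\<omega>. max_load n m \<omega> \<ge> k}"
    using bin ml by (simp add: q_def)
qed

end
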